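(* Let $C$ be a configuration of a finite labeled prime event structure and let $e_1,e_2\in C$ be concurrent events. Then $T(C)=T(C_{e_1<e_2})\cup T(C_{e_2<e_1})$ and $T(C_{e_1<e_2})\cap T(C_{e_2<e_1})=\emptyset$.
   Context: A finite labeled prime event structure is $\langle E,<,\#,h\rangle$ with finite $E$, strict partial order $<$ (causality), labeling $h$, and symmetric irreflexive conflict relation $\#$ closed under $<$. A configuration is a left-closed, conflict-free subset of $E$. Events $e,e'$ are concurrent if $e\neq e'$, neither $e<e'$ nor $e'<e$, and not $e\#e'$. $T(C)$ is the set of traces of $C$: sequences in which every event of $C$ occurs exactly once and $e_i<e_j$ implies $i<j$. The split $C_{e_1<e_2}$ is the structure with event set $C$, causality $(<\cup\{(e_1,e_2)\})^+$ restricted to $C\times C$ ($^+$ denoting transitive closure), no conflicts, and labeling $h|_C$; $T(C_{e_1<e_2})$ is the set of sequences listing every event of $C$ exactly once and respecting this enlarged causality. *)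

theory Defs
  imports Main
begin

definition les :: "'a set \<Rightarrow> ('a \<times> 'a) set \<Rightarrow> ('a \<times> 'a) set \<Rightarrow> ('a \<Rightarrow> 'l) \<Rightarrow> bool" where
  "les E lt cf h \<longleftrightarrow>
     finite E \<and> lt \<subseteq> E \<times> E \<and> cf \<subseteq> E \<times> E \<and>
     irrefl lt \<and> trans lt \<and>
     sym cf \<and> irrefl cf \<and>
     (\<forall>e1 e2 e3. (e1, e2) \<in> cf \<and> (e2, e3) \<in> lt \<longrightarrow> (e1, e3) \<in> cf)"

definition configuration :: "'a set \<Rightarrow> ('a \<times> 'a) set \<Rightarrow> ('a \<times> 'a) set \<Rightarrow> 'a set \<Rightarrow> bool" where
  "configuration E lt cf C \<longleftrightarrow>
     C \<subseteq> E \<and>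
     (\<forall>e\<in>C. \<forall>e'. (e', e) \<in> lt \<longrightarrow> e' \<in> C) \<and>
     (\<forall>e\<in>C. \<forall>e'\<in>C. (e, e') \<notin> cf)"

definition concurrent :: "('a \<times> 'a) set \<Rightarrow> ('a \<times> 'a) set \<Rightarrow> 'a \<Rightarrow> 'a \<Rightarrow> bool" where
  "concurrent lt cf e e' \<longleftrightarrow>
     e \<noteq> e' \<and> (e, e') \<notin> lt \<and> (e', e) \<notin> lt \<and> (e, e') \<notin> cf"

definition traces :: "('a \<times> 'a) set \<Rightarrow> 'a set \<Rightarrow> 'a list set" where
  "traces lt C = {w. distinct w \<and> set w = C \<and>
     (\<forall>i j. i < length w \<and> j < length w \<and> (w ! i, w ! j) \<in> lt \<longrightarrow> i < j)}"

text \<open>Causality of the split C_{e1<e2}.\<close>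
definition split_order :: "('a \<times> 'a) set \<Rightarrow> 'a set \<Rightarrow> 'a \<Rightarrow> 'a \<Rightarrow> ('a \<times> 'a) set" where
  "split_order lt C e1 e2 = (lt \<union> {(e1, e2)})\<^sup>+ \<inter> (C \<times> C)"

end

theory Submission
  imports Defs
begin

lemma path_lemma:
  assumes cl: "\<forall>e\<in>C. \<forall>e'. (e', e) \<in> lt \<longrightarrow> e' \<in> C"
    and w: "w \<in> traces lt C"
    and a: "a < length w" "b < length w" "w ! a = e1" "w ! b = e2" "a < b"
    and e1C: "e1 \<in> C"
    and p: "(x, y) \<in> (lt \<union> {(e1, e2)})\<^sup>+"
  shows "y \<in> C \<Longrightarrow> x \<in> C \<and> (\<forall>i j. i < length w \<and> j < length w \<and> w ! i = x \<and> w ! j = y \<longrightarrow> i < j)"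
  using p
proof (induction rule: trancl_induct)
  case (base y)
  from w have d: "distinct w" and s: "set w = C"
    and o: "\<forall>i j. i < length w \<and> j < length w \<and> (w ! i, w ! j) \<in> lt \<longrightarrow> i < j"
    by (auto simp: traces_def)
  show ?case
  proof (cases "(x, y) \<in> lt")
    case True
    then show ?thesis using cl base o by auto
  next
    case False
    then have "x = e1" "y = e2" using base by auto
    then show ?thesis using e1C a d by (auto simp: nth_eq_iff_index_eq)
  qed
next
  case (step y z)
  from w have d: "distinct w" and s: "set w = C"
    and o: "\<forall>i j. i < length w \<and> j < length w \<and> (w ! i, w ! j) \<in> lt \<longrightarrow> i < j"
    by (auto simp: traces_def)
  have yC: "y \<in> C" and yz: "\<forall>i j. i < length w \<and> j < length w \<and> w ! i = y \<and> w ! j = z \<longrightarrow> i < j"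
  proof -
    show "y \<in> C"
    proof (cases "(y, z) \<in> lt")
      case True then show ?thesis using cl step by auto
    next
      case False then show ?thesis using step e1C by auto
    qed
    show "\<forall>i j. i < length w \<and> j < length w \<and> w ! i = y \<and> w ! j = z \<longrightarrow> i < j"
    proof (cases "(y, z) \<in> lt")
      case True then show ?thesis using o by auto
    next
      case False
      then have "y = e1" "z = e2" using step by auto
      then show ?thesis using a d by (auto simp: nth_eq_iff_index_eq)
    qed
  qed
  from step.IH[OF yC] have xC: "x \<in> C" and xy: "\<forall>i j. i < length w \<and> j < length w \<and> w ! i = x \<and> w ! j = y \<longrightarrow> i < j" by auto
  obtain k where k: "k < length w" "w ! k = y" using yC s by (metis in_set_conv_nth)
  show ?case
  proof (intro conjI xC allI impI)
    fix i j assume hh: "i < length w \<and> j < length w \<and> w ! i = x \<and> w ! j = z"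
    have "i < k" using xy hh k by blast
    moreover have "k < j" using yz hh k by blast
    ultimately show "i < j" by simp
  qed
qed

lemma sub_trace:
  assumes cl: "\<forall>e\<in>C. \<forall>e'. (e', e) \<in> lt \<longrightarrow> e' \<in> C"
    and w: "w \<in> traces lt C"
    and a: "a < length w" "b < length w" "w ! a = e1" "w ! b = e2" "a < b"
    and e1C: "e1 \<in> C"
  shows "w \<in> traces (split_order lt C e1 e2) C"
proof -
  have "\<forall>i j. i < length w \<and> j < length w \<and> (w ! i, w ! j) \<in> split_order lt C e1 e2 \<longrightarrow> i < j"
  proof (intro allI impI)
    fix i j assume h: "i < length w \<and> j < length w \<and> (w ! i, w ! j) \<in> split_order lt C e1 e2"
    then have "(w ! i, w ! j) \<in> (lt \<union> {(e1, e2)})\<^sup>+" "w ! j \<in> C" unfolding split_order_def by blast+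
    from path_lemma[OF cl w a e1C this(1) this(2)] h show "i < j" by blast
  qed
  then show ?thesis using w unfolding traces_def by blast
qed

lemma super_trace:
  assumes w: "w \<in> traces (split_order lt C e1 e2) C"
  shows "w \<in> traces lt C"
proof -
  have "\<forall>i j. i < length w \<and> j < length w \<and> (w ! i, w ! j) \<in> lt \<longrightarrow> i < j"
  proof (intro allI impI)
    fix i j assume h: "i < length w \<and> j < length w \<and> (w ! i, w ! j) \<in> lt"
    have "set w = C" using w by (auto simp: traces_def)
    have "(w ! i, w ! j) \<in> (lt \<union> {(e1, e2)})\<^sup>+" using h by (intro r_into_trancl) simp
    moreover have "w ! i \<in> C" "w ! j \<in> C" using h \<open>set w = C\<close> nth_mem by blast+
    ultimately have "(w ! i, w ! j) \<in> split_order lt C e1 e2"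
      unfolding split_order_def by blast
    moreover have "\<forall>i j. i < length w \<and> j < length w \<and> (w ! i, w ! j) \<in> split_order lt C e1 e2 \<longrightarrow> i < j"
      using w unfolding traces_def by blast
    ultimately show "i < j" using h by blast
  qed
  then show ?thesis using w unfolding traces_def by blast
qed

theorem lemma11:
  fixes E :: "'a set" and lt cf :: "('a \<times> 'a) set" and h :: "'a \<Rightarrow> 'l"
    and C :: "'a set" and e1 e2 :: 'a
  assumes "les E lt cf h"
    and "configuration E lt cf C"
    and "e1 \<in> C" and "e2 \<in> C"
    and "concurrent lt cf e1 e2"
  shows "traces lt C = traces (split_order lt C e1 e2) C \<union> traces (split_order lt C e2 e1) C
     \<and> traces (split_order lt C e1 e2) C \<inter> traces (split_order lt C e2 e1) C = {}"
proof
  have cl: "\<forall>e\<in>C. \<forall>e'. (e', e) \<in> lt \<longrightarrow> e' \<in> C" using assms(2) by (simp add: configuration_def)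
  have ne: "e1 \<noteq> e2" using assms(5) by (simp add: concurrent_def)
  show "traces lt C = traces (split_order lt C e1 e2) C \<union> traces (split_order lt C e2 e1) C"
  proof
    show "traces lt C \<subseteq> traces (split_order lt C e1 e2) C \<union> traces (split_order lt C e2 e1) C"
    proof
      fix w assume w: "w \<in> traces lt C"
      then have s: "set w = C" by (simp add: traces_def)
      obtain a where a: "a < length w" "w ! a = e1" using s assms(3) by (metis in_set_conv_nth)
      obtain b where b: "b < length w" "w ! b = e2" using s assms(4) by (metis in_set_conv_nth)
      have "a \<noteq> b" using a b ne by auto
      then consider "a < b" | "b < a" by linarith
      then show "w \<in> traces (split_order lt C e1 e2) C \<union> traces (split_order lt C e2 e1) C"
      proof cases
        case 1 then show ?thesis using sub_trace[OF cl w a(1) b(1) a(2) b(2) 1 assms(3)] by blast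
      next
        case 2 then show ?thesis using sub_trace[OF cl w b(1) a(1) b(2) a(2) 2 assms(4)] by blast
      qed
    qed
    show "traces (split_order lt C e1 e2) C \<union> traces (split_order lt C e2 e1) C \<subseteq> traces lt C"
      using super_trace[of _ lt C e1 e2] super_trace[of _ lt C e2 e1] by blast
  qed
  show "traces (split_order lt C e1 e2) C \<inter> traces (split_order lt C e2 e1) C = {}"
  proof (rule ccontr)
    assume "\<not> ?thesis"
    then obtain w where w1: "w \<in> traces (split_order lt C e1 e2) C"
      and w2: "w \<in> traces (split_order lt C e2 e1) C" by blast
    then have s: "set w = C" by (simp add: traces_def)
    obtain a where a: "a < length w" "w ! a = e1" using s assms(3) by (metis in_set_conv_nth)
    obtain b where b: "b < length w" "w ! b = e2" using s assms(4) by (metis in_set_conv_nth)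
    have "(e1, e2) \<in> split_order lt C e1 e2" using assms(3,4) by (auto simp: split_order_def)
    then have "a < b" using w1 a b by (auto simp: traces_def)
    have "(e2, e1) \<in> split_order lt C e2 e1" using assms(3,4) by (auto simp: split_order_def)
    then have "b < a" using w2 a b by (auto simp: traces_def)
    with \<open>a < b\<close> show False by simp
  qed
qed

end
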